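(* Let $p$ be a prime, $\alpha\in\mathbb{N}$, $r\in\mathbb{Z}$, and let $f(x)\in\mathbb{Z}_p[x]$ with $\deg f=l\in\mathbb{N}$. Then there is a sequence $(a_k)_{k\in\mathbb{N}}$ of $p$-adic integers such that for every $n\in\mathbb{N}$, $$\sum_{k=0}^n\binom nk(-1)^k\Big\lfloor\frac k{p^{\alpha-1}}\Big\rfloor!\binom{\{r\}_{p^{\alpha-1}}+\{k-r\}_{p^{\alpha-1}}}{\{r\}_{p^{\alpha-1}}}a_k=\begin{cases}p^lf\big(\frac{n-r}{p^{\alpha}}\big)&\text{if } n\equiv r\pmod{p^{\alpha}},\\ 0&\text{otherwise}.\end{cases}$$
   Context: For an integer $a$ and positive real $m$, $\{a\}_m$ is the unique number in $[0,m)$ with $a-\{a\}_m\in m\mathbb{Z}$ (so $\{a\}_{p^{-1}}=0$). When $\alpha=0$, $\lfloor k/p^{-1}\rfloor=pk$. $\mathbb{Z}_p$ denotes the $p$-adic integers. *)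

theory Defs
  imports Main "HOL-Number_Theory.Cong"
begin

text \<open>p-adic integers, modelled by the standard inverse-limit construction:
  a p-adic integer is a sequence x :: nat => int of truncations that is compatible,
  i.e. x (m+1) = x m (mod p^m); two such sequences represent the same p-adic integer
  iff they agree modulo p^m for every m.  Ring operations (and hence sums, products,
  integer scalars, polynomial evaluation at an integer) are computed componentwise.\<close>

definition padic_int :: "nat \<Rightarrow> (nat \<Rightarrow> int) \<Rightarrow> bool" where
  "padic_int p x \<longleftrightarrow> (\<forall>m. [x (Suc m) = x m] (mod int p ^ m))"

definition padic_eq :: "nat \<Rightarrow> (nat \<Rightarrow> int) \<Rightarrow> (nat \<Rightarrow> int) \<Rightarrow> bool" where
  "padic_eq p x y \<longleftrightarrow> (\<forall>m. [x m = y m] (mod int p ^ m))"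

text \<open>floor(k / p^(alpha-1)), with the convention floor(k / p^(-1)) = p k when alpha = 0.\<close>
definition flr :: "nat \<Rightarrow> nat \<Rightarrow> nat \<Rightarrow> nat" where
  "flr p \<alpha> k = (if \<alpha> = 0 then p * k else k div p ^ (\<alpha> - 1))"

text \<open>{a}_(p^(alpha-1)), with {a}_(p^(-1)) = 0 when alpha = 0.\<close>
definition frc :: "nat \<Rightarrow> nat \<Rightarrow> int \<Rightarrow> int" where
  "frc p \<alpha> a = (if \<alpha> = 0 then 0 else a mod (int p ^ (\<alpha> - 1)))"

definition lhs_comp :: "nat \<Rightarrow> nat \<Rightarrow> int \<Rightarrow> (nat \<Rightarrow> nat \<Rightarrow> int) \<Rightarrow> nat \<Rightarrow> nat \<Rightarrow> int" where
  "lhs_comp p \<alpha> r a n m =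
     (\<Sum>k=0..n. int (n choose k) * (-1) ^ k * int (fact (flr p \<alpha> k))
        * int (nat (frc p \<alpha> r + frc p \<alpha> (int k - r)) choose nat (frc p \<alpha> r)) * a k m)"

text \<open>m-th component of the right-hand side; f = sum_{i<=l} c_i x^i.\<close>
definition rhs_comp :: "nat \<Rightarrow> nat \<Rightarrow> int \<Rightarrow> nat \<Rightarrow> (nat \<Rightarrow> nat \<Rightarrow> int) \<Rightarrow> nat \<Rightarrow> nat \<Rightarrow> int" where
  "rhs_comp p \<alpha> r l c n m =
     (if [int n = r] (mod int p ^ \<alpha>)
      then int p ^ l * (\<Sum>i\<le>l. c i m * ((int n - r) div int p ^ \<alpha>) ^ i)
      else 0)"

end

theory Submission
  imports Defs "HOL-Number_Theory.Number_Theory"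
begin


definition NN :: "(nat \<Rightarrow> int) \<Rightarrow> nat \<Rightarrow> int" where
  "NN g k = (\<Sum>j=0..k. int (k choose j) * (-1) ^ j * g j)"

definition ff :: "int \<Rightarrow> nat \<Rightarrow> int" where
  "ff x u = (\<Prod>t<u. x - int t)"

lemma ff_0 [simp]: "ff x 0 = 1" by (simp add: ff_def)
lemma ff_Suc: "ff x (Suc u) = ff x u * (x - int u)" by (simp add: ff_def)

lemma ff_shift: "ff (x + 1) (Suc u) = ff x (Suc u) + int (Suc u) * ff x u"
proof (induction u)
  case 0 then show ?case by (simp add: ff_Suc)
next
  case (Suc u)
  have "ff (x + 1) (Suc (Suc u)) = ff (x+1) (Suc u) * (x + 1 - int (Suc u))" by (simp add: ff_Suc)
  also have "\<dots> = (ff x (Suc u) + int (Suc u) * ff x u) * (x - int u)" using Suc by simp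
  also have "\<dots> = ff x (Suc (Suc u)) + int (Suc (Suc u)) * ff x (Suc u)"
    by (simp add: ff_Suc algebra_simps)
  finally show ?case .
qed

lemma NN_0 [simp]: "NN g 0 = g 0" by (simp add: NN_def)

lemma NN_Suc: "NN g (Suc k) = NN g k - NN (\<lambda>j. g (Suc j)) k"
proof -
  have "NN g (Suc k) = (\<Sum>j=0..Suc k. int (Suc k choose j) * (-1) ^ j * g j)" by (simp add: NN_def)
  also have "\<dots> = g 0 + (\<Sum>j=0..k. int (Suc k choose Suc j) * (-1) ^ Suc j * g (Suc j))"
    by (subst sum.atLeast0_atMost_Suc_shift) simp
  also have "(\<Sum>j=0..k. int (Suc k choose Suc j) * (-1) ^ Suc j * g (Suc j))
     = (\<Sum>j=0..k. int (k choose j) * (-1) ^ Suc j * g (Suc j))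
                     + (\<Sum>j=0..k. int (k choose Suc j) * (-1) ^ Suc j * g (Suc j))"
    unfolding sum.distrib[symmetric] by (intro sum.cong) (auto simp: algebra_simps)
  hence "g 0 + (\<Sum>j=0..k. int (Suc k choose Suc j) * (-1) ^ Suc j * g (Suc j)) = g 0 + (\<Sum>j=0..k. int (k choose j) * (-1) ^ Suc j * g (Suc j))
                     + (\<Sum>j=0..k. int (k choose Suc j) * (-1) ^ Suc j * g (Suc j))" by simp
  also have "g 0 + (\<Sum>j=0..k. int (k choose Suc j) * (-1) ^ Suc j * g (Suc j)) = NN g k"
  proof -
    have "NN g (Suc k) = 0" if False using that by simp
    have "(\<Sum>j=0..Suc k. int (k choose j) * (-1) ^ j * g j)
          = g 0 + (\<Sum>j=0..k. int (k choose Suc j) * (-1) ^ Suc j * g (Suc j))"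
      by (subst sum.atLeast0_atMost_Suc_shift) simp
    moreover have "(\<Sum>j=0..Suc k. int (k choose j) * (-1) ^ j * g j) = NN g k"
      by (simp add: NN_def)
    ultimately show ?thesis by simp
  qed
  moreover have "(\<Sum>j=0..k. int (k choose j) * (-1) ^ Suc j * g (Suc j)) = - NN (\<lambda>j. g (Suc j)) k"
    by (simp add: NN_def sum_negf[symmetric])
  ultimately show ?thesis by simp
qed

lemma NN_ext: "(\<And>j. j \<le> k \<Longrightarrow> g j = h j) \<Longrightarrow> NN g k = NN h k"
  unfolding NN_def by (intro sum.cong) auto

lemma NN_cong: "(\<And>j. j \<le> k \<Longrightarrow> [g j = h j] (mod M)) \<Longrightarrow> [NN g k = NN h k] (mod M)"
  unfolding NN_def by (intro cong_sum cong_mult cong_refl) auto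

lemma NN_sum: "NN (\<lambda>j. \<Sum>i\<in>I. f i j) k = (\<Sum>i\<in>I. NN (f i) k)"
  unfolding NN_def by (simp add: sum_distrib_left sum.swap[of _ I] mult.assoc)

lemma NN_mult: "NN (\<lambda>j. c * g j) k = c * NN g k"
  unfolding NN_def by (simp add: sum_distrib_left algebra_simps)

lemma NN_diff: "NN (\<lambda>j. g j - h j) k = NN g k - NN h k"
  unfolding NN_def by (simp add: sum_subtractf algebra_simps)

lemma NN_ff: "NN (\<lambda>j. ff (int j) u) k = (if u = k then (-1)^k * int (fact k) else 0)"
proof (induction k arbitrary: u)
  case 0
  then show ?case by (cases u) (auto simp: ff_def)
next
  case (Suc k)
  show ?case
  proof (cases u)
    case 0
    then show ?thesis using NN_Suc[of "\<lambda>j. ff (int j) 0" k] by simp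
  next
    case (Suc u')
    have "NN (\<lambda>j. ff (int (Suc j)) u) k = NN (\<lambda>j. ff (int j) u + int u * ff (int j) u') k"
    proof (intro NN_ext)
      fix j
      have "int (Suc j) = int j + 1" by simp
      then show "ff (int (Suc j)) u = ff (int j) u + int u * ff (int j) u'"
        using ff_shift[of "int j" u'] Suc by (simp add: ac_simps)
    qed
    also have "\<dots> = NN (\<lambda>j. ff (int j) u) k + int u * NN (\<lambda>j. ff (int j) u') k"
      using NN_sum[of "\<lambda>i j. if i = (0::nat) then ff (int j) u else int u * ff (int j) u'" "{0,1}" k]
      by (simp add: NN_mult)
    finally have "NN (\<lambda>j. ff (int j) u) (Suc k) = - int u * NN (\<lambda>j. ff (int j) u') k"
      using NN_Suc[of "\<lambda>j. ff (int j) u" k] by simp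
    then show ?thesis using Suc.IH[of u'] Suc by (auto simp: algebra_simps)
  qed
qed

lemma NN_inversion: "(\<Sum>k=0..n. int (n choose k) * (-1)^k * NN g k) = g n"
proof (induction n arbitrary: g)
  case 0 then show ?case by simp
next
  case (Suc n)
  define A where "A = (\<Sum>k=0..n. int (n choose k) * (-1)^Suc k * NN g (Suc k))"
  define B where "B = (\<Sum>k=0..n. int (n choose Suc k) * (-1)^Suc k * NN g (Suc k))"
  have e1: "(\<Sum>k=0..Suc n. int (Suc n choose k) * (-1)^k * NN g k)
      = NN g 0 + (\<Sum>k=0..n. int (Suc n choose Suc k) * (-1)^Suc k * NN g (Suc k))"
    by (subst sum.atLeast0_atMost_Suc_shift) simp
  have e2: "(\<Sum>k=0..n. int (Suc n choose Suc k) * (-1)^Suc k * NN g (Suc k)) = A + B"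
    unfolding A_def B_def sum.distrib[symmetric] by (intro sum.cong) (auto simp: algebra_simps)
  have e3: "NN g 0 + B = (\<Sum>k=0..Suc n. int (n choose k) * (-1)^k * NN g k)"
    unfolding B_def by (subst sum.atLeast0_atMost_Suc_shift) simp
  have e4: "(\<Sum>k=0..Suc n. int (n choose k) * (-1)^k * NN g k) = g n"
    using Suc.IH[of g] by simp
  have e5: "A = (\<Sum>k=0..n. int (n choose k) * (-1)^k * NN (\<lambda>j. g (Suc j)) k)
         - (\<Sum>k=0..n. int (n choose k) * (-1)^k * NN g k)"
    unfolding A_def by (simp add: NN_Suc sum_subtractf[symmetric] algebra_simps)
  have e6: "(\<Sum>k=0..n. int (n choose k) * (-1)^k * NN (\<lambda>j. g (Suc j)) k) = g (Suc n)"
    by (rule Suc.IH)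
  have e7: "(\<Sum>k=0..n. int (n choose k) * (-1)^k * NN g k) = g n" by (rule Suc.IH)
  have "A = g (Suc n) - g n" using e5 e6 e7 by linarith
  moreover have "NN g 0 + B = g n" using e3 e4 by linarith
  ultimately show ?case using e1 e2 by linarith
qed



lemma pow_ff: "\<exists>d. \<forall>x. (x - c)^e = (\<Sum>u\<le>e. d u * ff x u)"
proof (induction e)
  case 0
  show ?case by (rule exI[of _ "\<lambda>_. 1"]) simp
next
  case (Suc e)
  then obtain d where d: "\<And>x. (x - c)^e = (\<Sum>u\<le>e. d u * ff x u)" by blast
  define d' where "d' u = (if u = 0 then 0 else d (u - 1)) + (if u \<le> e then d u * (int u - c) else 0)" for u
  have "(x - c)^Suc e = (\<Sum>u\<le>Suc e. d' u * ff x u)" for x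
  proof -
    have s1: "(\<Sum>u\<le>Suc e. (if u = 0 then 0 else d (u - 1)) * ff x u) = (\<Sum>u\<le>e. d u * ff x (Suc u))"
      by (subst sum.atMost_Suc_shift) simp
    have s2: "(\<Sum>u\<le>Suc e. (if u \<le> e then d u * (int u - c) else 0) * ff x u) = (\<Sum>u\<le>e. d u * (int u - c) * ff x u)"
      by (simp add: sum.atMost_Suc)
    have "(\<Sum>u\<le>Suc e. d' u * ff x u) = (\<Sum>u\<le>Suc e. (if u = 0 then 0 else d (u - 1)) * ff x u)
        + (\<Sum>u\<le>Suc e. (if u \<le> e then d u * (int u - c) else 0) * ff x u)"
      unfolding d'_def sum.distrib[symmetric] by (intro sum.cong) (auto simp: algebra_simps)
    also have "\<dots> = (\<Sum>u\<le>e. d u * ff x (Suc u) + d u * (int u - c) * ff x u)"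
      unfolding s1 s2 sum.distrib by simp
    also have "\<dots> = (\<Sum>u\<le>e. d u * ff x u) * (x - c)"
      unfolding sum_distrib_right by (intro sum.cong) (auto simp: ff_Suc algebra_simps)
    also have "\<dots> = (x - c)^Suc e" using d[of x] by simp
    finally show ?thesis by simp
  qed
  then show ?case by blast
qed

lemma ff_mono: "\<exists>s. \<forall>x. ff x u = (\<Sum>i\<le>u. s i * x^i)"
proof (induction u)
  case 0
  show ?case by (rule exI[of _ "\<lambda>_. 1"]) simp
next
  case (Suc u)
  then obtain s where s: "\<And>x. ff x u = (\<Sum>i\<le>u. s i * x^i)" by blast
  define s' where "s' i = (if i = 0 then 0 else s (i - 1)) - (if i \<le> u then int u * s i else 0)" for i
  have "ff x (Suc u) = (\<Sum>i\<le>Suc u. s' i * x^i)" for x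
  proof -
    have s1: "(\<Sum>i\<le>Suc u. (if i = 0 then 0 else s (i - 1)) * x^i) = (\<Sum>i\<le>u. s i * x^Suc i)"
      by (subst sum.atMost_Suc_shift) simp
    have s2: "(\<Sum>i\<le>Suc u. (if i \<le> u then int u * s i else 0) * x^i) = (\<Sum>i\<le>u. int u * s i * x^i)"
      by (simp add: sum.atMost_Suc)
    have "(\<Sum>i\<le>Suc u. s' i * x^i) = (\<Sum>i\<le>Suc u. (if i = 0 then 0 else s (i - 1)) * x^i)
        - (\<Sum>i\<le>Suc u. (if i \<le> u then int u * s i else 0) * x^i)"
      unfolding s'_def sum_subtractf[symmetric] by (intro sum.cong) (auto simp: algebra_simps)
    also have "\<dots> = (\<Sum>i\<le>u. s i * x^Suc i - int u * s i * x^i)"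
      unfolding s1 s2 sum_subtractf by simp
    also have "\<dots> = (\<Sum>i\<le>u. s i * x^i) * (x - int u)"
      unfolding sum_distrib_right by (intro sum.cong) (auto simp: algebra_simps)
    also have "\<dots> = ff x (Suc u)" using s[of x] by (simp add: ff_Suc)
    finally show ?thesis by simp
  qed
  then show ?case by blast
qed

lemma ff_zero: "0 \<le> x \<Longrightarrow> x < int u \<Longrightarrow> ff x u = 0"
  unfolding ff_def
  by (rule prod_zero) (auto intro!: bexI[of _ "nat x"])

lemma ff_fact: "ff (int K) K = int (fact K)"
proof (induction K)
  case 0 then show ?case by simp
next
  case (Suc K)
  have "ff (int (Suc K)) (Suc K) = ff (int K + 1) (Suc K)" by (simp add: ac_simps)
  also have "\<dots> = ff (int K) (Suc K) + int (Suc K) * ff (int K) K" by (rule ff_shift)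
  also have "ff (int K) (Suc K) = 0" by (simp add: ff_Suc)
  finally show ?case using Suc by (simp add: algebra_simps)
qed



lemma pow_dvd_iff_mult: "prime (p::nat) \<Longrightarrow> x \<noteq> 0 \<Longrightarrow> p ^ e dvd x \<longleftrightarrow> e \<le> multiplicity p x"
  by (rule power_dvd_iff_le_multiplicity) (auto)

lemma mult_fact_nz: "prime (p::nat) \<Longrightarrow> x \<noteq> 0 \<Longrightarrow> y \<noteq> 0 \<Longrightarrow>
   multiplicity p (x * y) = multiplicity p x + multiplicity p y"
  by (rule prime_elem_multiplicity_mult_distrib) auto

lemma mult_le_B: "prime (p::nat) \<Longrightarrow> m \<noteq> 0 \<Longrightarrow> m \<le> B \<Longrightarrow> multiplicity p m \<le> B"
proof -
  assume p: "prime p" and m: "m \<noteq> 0" "m \<le> B"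
  have "p ^ multiplicity p m dvd m" by (rule multiplicity_dvd)
  hence "p ^ multiplicity p m \<le> m" using m by (intro dvd_imp_le) auto
  moreover have "multiplicity p m < 2 ^ multiplicity p m" by (rule less_exp)
  moreover have "2 ^ multiplicity p m \<le> p ^ multiplicity p m"
    by (rule power_mono) (use prime_ge_2_nat[OF p] in simp_all)
  ultimately show ?thesis using m by linarith
qed

lemma card_pow_dvd: "prime (p::nat) \<Longrightarrow> m \<noteq> 0 \<Longrightarrow> m \<le> B \<Longrightarrow>
   (\<Sum>j\<in>{1..B}. if p ^ j dvd m then 1 else 0) = multiplicity p m"
proof -
  assume p: "prime p" and m: "m \<noteq> 0" "m \<le> B"
  have le: "multiplicity p m \<le> B" by (rule mult_le_B[OF p m])
  have eq: "{j\<in>{1..B}. p ^ j dvd m} = {1..multiplicity p m}"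
  proof (rule Set.set_eqI)
    fix j show "j \<in> {j\<in>{1..B}. p ^ j dvd m} \<longleftrightarrow> j \<in> {1..multiplicity p m}"
      using pow_dvd_iff_mult[OF p m(1), of j] le by auto
  qed
  have "(\<Sum>j\<in>{1..B}. if p ^ j dvd m then 1 else 0) = card ({1..B} \<inter> {j. p ^ j dvd m})"
    by (simp add: sum.If_cases)
  also have "{1..B} \<inter> {j. p ^ j dvd m} = {j\<in>{1..B}. p ^ j dvd m}" by blast
  finally show ?thesis unfolding eq by simp
qed


lemma legendre: "prime (p::nat) \<Longrightarrow> n \<le> B \<Longrightarrow> multiplicity p (fact n) = (\<Sum>j\<in>{1..B}. n div p ^ j)"
proof (induction n)
  case 0 then show ?case by simp
next
  case (Suc n)
  have p: "prime p" by fact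
  have IH: "multiplicity p (fact n) = (\<Sum>j\<in>{1..B}. n div p ^ j)" using Suc by simp
  have "multiplicity p (fact (Suc n) :: nat) = multiplicity p (Suc n) + multiplicity p (fact n)"
    using mult_fact_nz[OF p, of "Suc n" "fact n"] by (simp del: of_nat_Suc fact_Suc add: fact_Suc[of n])
  also have "multiplicity p (Suc n) = (\<Sum>j\<in>{1..B}. if p ^ j dvd Suc n then 1 else 0)"
    using card_pow_dvd[OF p, of "Suc n" B] Suc.prems by simp
  also have "(\<Sum>j\<in>{1..B}. if p ^ j dvd Suc n then 1 else 0) + multiplicity p (fact n)
      = (\<Sum>j\<in>{1..B}. (if p ^ j dvd Suc n then 1 else 0) + n div p ^ j)"
    by (simp add: IH sum.distrib)
  also have "\<dots> = (\<Sum>j\<in>{1..B}. Suc n div p ^ j)"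
    by (intro sum.cong refl) (auto simp: div_Suc dvd_eq_mod_eq_0)
  finally show ?case .
qed


lemma carry_formula:
  assumes p: "prime (p::nat)" and B: "x + y \<le> B"
  shows "multiplicity p ((x + y) choose x) = (\<Sum>j\<in>{1..B}. (x mod p ^ j + y mod p ^ j) div p ^ j)"
proof -
  have f: "fact x * fact y * ((x + y) choose x) = (fact (x + y) :: nat)"
    using binomial_fact_lemma[of x "x+y"] by simp
  have nz: "((x + y) choose x) \<noteq> 0" by simp
  have m1: "multiplicity p (fact x * fact y * ((x + y) choose x) :: nat)
      = multiplicity p (fact x * fact y :: nat) + multiplicity p ((x + y) choose x)"
    by (rule mult_fact_nz[OF p]) (simp_all add: nz)
  have m2: "multiplicity p (fact x * fact y :: nat) = multiplicity p (fact x :: nat) + multiplicity p (fact y :: nat)"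
    by (rule mult_fact_nz[OF p]) simp_all
  have l1: "multiplicity p (fact (x + y) :: nat) = (\<Sum>j\<in>{1..B}. (x + y) div p ^ j)"
    using legendre[OF p B] .
  have l2: "multiplicity p (fact x :: nat) = (\<Sum>j\<in>{1..B}. x div p ^ j)"
    by (rule legendre[OF p]) (use B in linarith)
  have l3: "multiplicity p (fact y :: nat) = (\<Sum>j\<in>{1..B}. y div p ^ j)"
    by (rule legendre[OF p]) (use B in linarith)
  have s: "(\<Sum>j\<in>{1..B}. (x + y) div p ^ j) = (\<Sum>j\<in>{1..B}. x div p ^ j) + (\<Sum>j\<in>{1..B}. y div p ^ j)
       + (\<Sum>j\<in>{1..B}. (x mod p ^ j + y mod p ^ j) div p ^ j)"
    unfolding sum.distrib[symmetric] by (intro sum.cong refl) (rule div_add1_eq)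
  show ?thesis using m1 m2 l1 l2 l3 s unfolding f by linarith
qed

lemma carry_le1: "(a mod (m::nat) + b mod m) div m \<le> 1"
proof (cases "m = 0")
  case False
  have "a mod m < m" "b mod m < m" using False by simp_all
  hence "a mod m + b mod m < m * 2" by linarith
  hence "(a mod m + b mod m) div m < 2" using False by (simp add: div_less_iff_less_mult)
  then show ?thesis by simp
qed simp



lemma BL_pt:
  assumes p2: "(p::nat) \<ge> 2" and b: "b < p ^ Suc d" and s: "s < p ^ Suc d"
  shows "(b mod p ^ j + s mod p ^ j) div p ^ j
        \<le> ((b mod p^d) mod p ^ j + (s mod p^d) mod p ^ j) div p ^ j + (if j = Suc d then 1 else 0)"
proof -
  consider "j \<le> d" | "j = Suc d" | "j > Suc d" by linarith
  then show ?thesis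
  proof cases
    case 1
    then have "p ^ j dvd p ^ d" by (simp add: le_imp_power_dvd)
    then have "(b mod p^d) mod p ^ j = b mod p ^ j" "(s mod p^d) mod p ^ j = s mod p ^ j"
      by (simp_all add: mod_mod_cancel)
    then show ?thesis by simp
  next
    case 2
    then show ?thesis using carry_le1[of b "p^j" s] by simp
  next
    case 3
    have "p ^ Suc d * 2 \<le> p ^ Suc d * p" using p2 by simp
    also have "\<dots> = p ^ Suc (Suc d)" by simp
    also have "\<dots> \<le> p ^ j" using 3 p2 by (intro power_increasing) auto
    finally have lt: "b + s < p ^ j" using b s by linarith
    then have "b mod p ^ j = b" "s mod p ^ j = s" by simp_all
    then show ?thesis using lt by simp
  qed
qed

lemma binom_BL:
  assumes p: "prime (p::nat)" and b: "b < p ^ Suc d" and s: "s < p ^ Suc d"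
  shows "multiplicity p ((b + s) choose b) \<le> multiplicity p ((b mod p^d + s mod p^d) choose (b mod p^d)) + 1"
proof -
  define B where "B = b + s"
  have p2: "p \<ge> 2" using prime_ge_2_nat[OF p] .
  have le: "b mod p^d + s mod p^d \<le> B" unfolding B_def
    using mod_less_eq_dividend[of b "p^d"] mod_less_eq_dividend[of s "p^d"] by linarith
  have "multiplicity p ((b + s) choose b) = (\<Sum>j\<in>{1..B}. (b mod p ^ j + s mod p ^ j) div p ^ j)"
    by (rule carry_formula[OF p]) (simp add: B_def)
  also have "\<dots> \<le> (\<Sum>j\<in>{1..B}. ((b mod p^d) mod p ^ j + (s mod p^d) mod p ^ j) div p ^ j + (if j = Suc d then 1 else 0))"
    by (intro sum_mono BL_pt[OF p2 b s])
  also have "\<dots> = (\<Sum>j\<in>{1..B}. ((b mod p^d) mod p ^ j + (s mod p^d) mod p ^ j) div p ^ j) + (\<Sum>j\<in>{1..B}. (if j = Suc d then 1 else 0))"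
    by (rule sum.distrib)
  also have "(\<Sum>j\<in>{1..B}. (if j = Suc d then 1 else 0)) \<le> (1::nat)"
    by (simp add: sum.delta)
  also have "(\<Sum>j\<in>{1..B}. ((b mod p^d) mod p ^ j + (s mod p^d) mod p ^ j) div p ^ j)
      = multiplicity p ((b mod p^d + s mod p^d) choose (b mod p^d))"
    by (rule carry_formula[OF p le, symmetric])
  finally show ?thesis by simp
qed

lemma LT_pt:
  assumes p2: "(p::nat) \<ge> 2" and b: "b \<le> \<kappa>" and k: "\<kappa> < p ^ d"
  shows "(b mod p ^ j + (\<kappa> - b) mod p ^ j) div p ^ j
        \<le> ((p^d * K + b) mod p ^ j + (\<kappa> - b) mod p ^ j) div p ^ j"
proof (cases "j \<le> d")
  case True
  then have "p ^ j dvd p ^ d" by (simp add: le_imp_power_dvd)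
  then obtain c where c: "p ^ d = p ^ j * c" by (auto simp: dvd_def)
  have "(p^d * K + b) mod p ^ j = (b + p ^ j * (c * K)) mod p ^ j" by (simp add: c algebra_simps)
  also have "\<dots> = b mod p ^ j" by (rule mod_mult_self2)
  finally show ?thesis by simp
next
  case False
  have "p ^ d \<le> p ^ j" using False p2 by (intro power_increasing) auto
  then have lt: "b < p ^ j" "\<kappa> - b < p ^ j" using b k by linarith+
  then have "b mod p ^ j = b" "(\<kappa> - b) mod p ^ j = \<kappa> - b" by simp_all
  then have "b mod p ^ j + (\<kappa> - b) mod p ^ j = \<kappa>" using b by simp
  moreover have "\<kappa> div p ^ j = 0" using k \<open>p ^ d \<le> p ^ j\<close> by simp
  ultimately show ?thesis by simp
qed

lemma binom_LT:
  assumes p: "prime (p::nat)" and b: "b \<le> \<kappa>" and k: "\<kappa> < p ^ d"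
  shows "multiplicity p (\<kappa> choose b) \<le> multiplicity p ((p^d * K + \<kappa>) choose (p^d * K + b))"
proof -
  define B where "B = p^d * K + \<kappa>"
  have p2: "p \<ge> 2" using prime_ge_2_nat[OF p] .
  have e1: "\<kappa> = b + (\<kappa> - b)" using b by simp
  have e2: "p^d * K + \<kappa> = (p^d * K + b) + (\<kappa> - b)" using b by simp
  have "multiplicity p (\<kappa> choose b) = multiplicity p ((b + (\<kappa> - b)) choose b)"
    using e1 by simp
  also have "\<dots> = (\<Sum>j\<in>{1..B}. (b mod p ^ j + (\<kappa> - b) mod p ^ j) div p ^ j)"
    by (rule carry_formula[OF p]) (use b in \<open>simp add: B_def\<close>)
  also have "\<dots> \<le> (\<Sum>j\<in>{1..B}. ((p^d * K + b) mod p ^ j + (\<kappa> - b) mod p ^ j) div p ^ j)"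
    by (intro sum_mono LT_pt[OF p2 b k])
  also have "\<dots> = multiplicity p (((p^d * K + b) + (\<kappa> - b)) choose (p^d * K + b))"
    by (rule carry_formula[OF p, symmetric]) (use b in \<open>simp add: B_def\<close>)
  also have "\<dots> = multiplicity p ((p^d * K + \<kappa>) choose (p^d * K + b))"
    using e2 by simp
  finally show ?thesis .
qed

lemma fact_p_mult:
  assumes p: "prime (p::nat)"
  shows "multiplicity p (fact (p * K) :: nat) = K + multiplicity p (fact K :: nat)"
proof -
  have p2: "p \<ge> 2" using prime_ge_2_nat[OF p] .
  define B where "B = p * K"
  have KB: "K \<le> B" using p2 unfolding B_def by simp
  have "multiplicity p (fact (p * K) :: nat) = (\<Sum>j\<in>{1..Suc B}. (p * K) div p ^ j)"
    by (rule legendre[OF p]) (simp add: B_def)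
  also have "\<dots> = (\<Sum>j\<in>{0..B}. (p * K) div p ^ Suc j)"
    using sum.shift_bounds_cl_Suc_ivl[of "\<lambda>j. (p * K) div p ^ j" 0 B] by simp
  also have "\<dots> = (\<Sum>j\<in>{0..B}. K div p ^ j)"
  proof (intro sum.cong refl)
    fix j
    have "(p * K) div p ^ Suc j = (p * K) div (p * p ^ j)" by simp
    also have "\<dots> = (p * K div p) div p ^ j" by (simp add: div_mult2_eq)
    also have "\<dots> = K div p ^ j" using p2 by simp
    finally show "(p * K) div p ^ Suc j = K div p ^ j" .
  qed
  also have "\<dots> = K + (\<Sum>j\<in>{1..B}. K div p ^ j)"
    by (simp add: sum.atLeast_Suc_atMost)
  also have "(\<Sum>j\<in>{1..B}. K div p ^ j) = multiplicity p (fact K :: nat)"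
    by (rule legendre[OF p KB, symmetric])
  finally show ?thesis .
qed



definition Wt :: "nat \<Rightarrow> nat \<Rightarrow> int \<Rightarrow> nat \<Rightarrow> int" where
  "Wt p \<alpha> r k = int (fact (flr p \<alpha> k)) * int (nat (frc p \<alpha> r + frc p \<alpha> (int k - r)) choose nat (frc p \<alpha> r))"

definition good :: "nat \<Rightarrow> nat \<Rightarrow> int \<Rightarrow> (nat \<Rightarrow> int) \<Rightarrow> bool" where
  "good p \<alpha> r g \<longleftrightarrow> (\<forall>k e. int p ^ e dvd Wt p \<alpha> r k \<longrightarrow> int p ^ e dvd NN g k)"

definition gT :: "nat \<Rightarrow> nat \<Rightarrow> int \<Rightarrow> nat \<Rightarrow> nat \<Rightarrow> int" where
  "gT p \<alpha> r i n = (if [int n = r] (mod int p ^ \<alpha>) then int p ^ i * ((int n - r) div int p ^ \<alpha>) ^ i else 0)"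

definition hF :: "nat \<Rightarrow> nat \<Rightarrow> nat \<Rightarrow> nat \<Rightarrow> nat \<Rightarrow> int" where
  "hF p \<alpha> b u n = (if [int n = int b] (mod int p ^ (\<alpha> - 1)) then ff ((int n - int b) div int p ^ (\<alpha> - 1)) u else 0)"

lemma good_sum: "(\<And>i. i \<in> I \<Longrightarrow> good p \<alpha> r (f i)) \<Longrightarrow> good p \<alpha> r (\<lambda>n. \<Sum>i\<in>I. f i n)"
  unfolding good_def NN_sum by (auto intro!: dvd_sum)

lemma good_mult: "good p \<alpha> r g \<Longrightarrow> good p \<alpha> r (\<lambda>n. c * g n)"
  unfolding good_def NN_mult by auto

lemma good_diff: "good p \<alpha> r g \<Longrightarrow> good p \<alpha> r h \<Longrightarrow> good p \<alpha> r (\<lambda>n. g n - h n)"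
  unfolding good_def NN_diff by auto

lemma int_pow_dvd_iff: "prime (p::nat) \<Longrightarrow> x \<noteq> 0 \<Longrightarrow> int p ^ e dvd int x \<longleftrightarrow> e \<le> multiplicity p x"
  by (metis of_nat_dvd_iff of_nat_power pow_dvd_iff_mult)

lemma Wt_0: "Wt p 0 r k = int (fact (p * k))"
  by (simp add: Wt_def flr_def frc_def)

lemma Wt_pos: "\<alpha> \<ge> 1 \<Longrightarrow> p > 0 \<Longrightarrow> Wt p \<alpha> r k = int (fact (k div p ^ (\<alpha> - 1)) *
   ((nat (r mod int (p ^ (\<alpha> - 1))) + nat ((int k - r) mod int (p ^ (\<alpha> - 1)))) choose nat (r mod int (p ^ (\<alpha> - 1)))))"
proof -
  assume a: "\<alpha> \<ge> 1" and p: "p > 0"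
  have "0 \<le> r mod int (p ^ (\<alpha> - 1))" "0 \<le> (int k - r) mod int (p ^ (\<alpha> - 1))" using p by simp_all
  then show ?thesis
    unfolding Wt_def flr_def frc_def using a
    by (simp add: nat_add_distrib of_nat_power[symmetric] del: of_nat_power)
qed

lemma Wt_mod: "\<alpha> \<ge> 1 \<Longrightarrow> p > 0 \<Longrightarrow> Wt p \<alpha> r k = Wt p \<alpha> (r mod int (p ^ (\<alpha> - 1))) k"
  using Wt_pos[of \<alpha> p r k] Wt_pos[of \<alpha> p "r mod int (p ^ (\<alpha> - 1))" k] by (simp add: mod_diff_right_eq)

lemma good_mod: "\<alpha> \<ge> 1 \<Longrightarrow> p > 0 \<Longrightarrow> good p \<alpha> r g \<longleftrightarrow> good p \<alpha> (r mod int (p ^ (\<alpha> - 1))) g"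
  unfolding good_def using Wt_mod[of \<alpha> p r] by simp

lemma sum_delta_mult: "finite S \<Longrightarrow> (\<Sum>u\<in>S. d u * (if u = k then X else 0)) = (if k \<in> S then d k * X else (0::int))"
proof -
  assume "finite S"
  have "(\<Sum>u\<in>S. d u * (if u = k then X else 0)) = (\<Sum>u\<in>S. if u = k then d k * X else 0)"
    by (intro sum.cong) auto
  also have "\<dots> = (if k \<in> S then d k * X else 0)" using \<open>finite S\<close> by (simp add: sum.delta')
  finally show ?thesis .
qed

theorem thm_alpha0:
  assumes p: "prime p"
  shows "good p 0 r (gT p 0 r i)"
  unfolding good_def
proof (intro allI impI)
  fix k e
  assume dv: "int p ^ e dvd Wt p 0 r k"
  obtain d where d: "\<And>x. (x - r)^i = (\<Sum>u\<le>i. d u * ff x u)" using pow_ff by blast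
  have g: "gT p 0 r i n = int p ^ i * (\<Sum>u\<le>i. d u * ff (int n) u)" for n
    by (simp add: gT_def d[symmetric])
  have "NN (gT p 0 r i) k = int p ^ i * (\<Sum>u\<le>i. d u * NN (\<lambda>n. ff (int n) u) k)"
    unfolding g NN_mult NN_sum by (simp add: NN_mult)
  also have "\<dots> = int p ^ i * (if k \<le> i then d k * ((-1)^k * int (fact k)) else 0)"
    unfolding NN_ff by (subst sum_delta_mult) (auto simp: eq_commute[of _ k])
  finally have N: "NN (gT p 0 r i) k = int p ^ i * (if k \<le> i then d k * ((-1)^k * int (fact k)) else 0)" .
  show "int p ^ e dvd NN (gT p 0 r i) k"
  proof (cases "k \<le> i")
    case False then show ?thesis using N by simp
  next
    case True
    have "e \<le> multiplicity p (fact (p * k) :: nat)"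
      using dv int_pow_dvd_iff[OF p, of "fact (p*k)" e] by (simp add: Wt_0)
    also have "\<dots> = k + multiplicity p (fact k :: nat)" by (rule fact_p_mult[OF p])
    also have "\<dots> \<le> i + multiplicity p (fact k :: nat)" using True by simp
    also have "\<dots> = multiplicity p (p ^ i * fact k :: nat)"
      using p by (simp add: mult_fact_nz prime_elem_multiplicity_mult_distrib)
    finally have "int p ^ e dvd int (p ^ i * fact k)"
      using int_pow_dvd_iff[OF p, of "p ^ i * fact k" e] p by (simp add: prime_gt_0_nat)
    then have "int p ^ e dvd int p ^ i * int (fact k)" by simp
    then have X: "int p ^ e dvd int p ^ i * int (fact k) * (d k * (-1)^k)" by (rule dvd_mult2)
    have "NN (gT p 0 r i) k = int p ^ i * int (fact k) * (d k * (-1)^k)" using N True by simp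
    then show ?thesis using X by simp
  qed
qed

theorem claim1:
  assumes p: "prime p"
  shows "good p 1 (int 0) (hF p 1 0 u)"
  unfolding good_def
proof (intro allI impI)
  fix k e
  assume dv: "int p ^ e dvd Wt p 1 (int 0) k"
  have W: "Wt p 1 (int 0) k = int (fact k)" by (simp add: Wt_def flr_def frc_def)
  have "hF p 1 0 u = (\<lambda>n. ff (int n) u)" by (rule ext) (simp add: hF_def)
  then have "NN (hF p 1 0 u) k = NN (\<lambda>n. ff (int n) u) k" by simp
  also have "\<dots> = (if u = k then (-1)^k * int (fact k) else 0)" by (rule NN_ff)
  finally show "int p ^ e dvd NN (hF p 1 0 u) k" using dv W by simp
qed



lemma Wt_nat_b:
  assumes p: "prime p" and a: "\<alpha> \<ge> 1" and b: "b < p ^ (\<alpha> - 1)"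
  shows "Wt p \<alpha> (int b) k = int (fact (k div p ^ (\<alpha> - 1)) *
          ((b + nat ((int k - int b) mod int (p ^ (\<alpha> - 1)))) choose b))"
proof -
  have "int b mod int (p ^ (\<alpha> - 1)) = int b" using b by simp
  then show ?thesis using Wt_pos[OF a, of p "int b" k] p prime_gt_0_nat by simp
qed

lemma mult_W: "prime (p::nat) \<Longrightarrow> int p ^ e dvd int (fact A * C) \<Longrightarrow> C \<noteq> 0 \<Longrightarrow>
   e \<le> multiplicity p (fact A :: nat) + multiplicity p C"
  using int_pow_dvd_iff[of p "fact A * C" e] mult_fact_nz[of p "fact A" C] by simp

lemma W_mult: "prime (p::nat) \<Longrightarrow> C \<noteq> 0 \<Longrightarrow> e \<le> multiplicity p (fact A :: nat) + multiplicity p C \<Longrightarrow>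
   int p ^ e dvd int (fact A * C)"
  using int_pow_dvd_iff[of p "fact A * C" e] mult_fact_nz[of p "fact A" C] by simp

lemma VI:
  assumes p: "prime p" and a: "\<alpha> \<ge> 2" and b: "b < p ^ (\<alpha> - 1)"
    and i: "i < k div p ^ (\<alpha> - 1)"
    and dv: "int p ^ e dvd Wt p \<alpha> (int b) k"
  shows "int p ^ (e + i) dvd Wt p (\<alpha> - 1) (int b) k"
proof -
  define d where "d = \<alpha> - 2"
  define q where "q = p ^ (\<alpha> - 1)"
  define q' where "q' = p ^ d"
  define K where "K = k div q"
  have p2: "p \<ge> 2" using prime_ge_2_nat[OF p] .
  have qq: "q = p ^ Suc d" "q = q' * p" using a unfolding q_def q'_def d_def
    by (simp_all add: Suc_diff_Suc numeral_2_eq_2 power_Suc2[symmetric])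
  have q'pos: "q' > 0" using p2 by (simp add: q'_def)
  define \<sigma> where "\<sigma> = nat ((int k - int b) mod int q)"
  define \<sigma>' where "\<sigma>' = nat ((int k - int b) mod int q')"
  have qpos: "q > 0" using p2 by (simp add: q_def)
  have \<sigma>q: "\<sigma> < q"
  proof -
    have "0 \<le> (int k - int b) mod int q" "(int k - int b) mod int q < int q" using qpos by simp_all
    then show ?thesis unfolding \<sigma>_def by (simp add: nat_less_iff)
  qed
  have \<sigma>': "\<sigma>' = \<sigma> mod q'"
  proof -
    define x where "x = (int k - int b) mod int q"
    have x0: "0 \<le> x" unfolding x_def using qpos by simp
    have dq: "int q' dvd int q" using qq by simp
    have "(int k - int b) mod int q' = x mod int q'"
      unfolding x_def using dq by (simp add: mod_mod_cancel)
    then have "\<sigma>' = nat (x mod int q')" unfolding \<sigma>'_def by simp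
    also have "\<dots> = nat x mod nat (int q')" using x0 q'pos by (simp add: nat_mod_distrib)
    also have "nat x = \<sigma>" unfolding x_def \<sigma>_def by simp
    finally show ?thesis by simp
  qed
  have bq: "b < p ^ Suc d" using b qq(1) unfolding q_def by (simp only:)
  have W1: "Wt p \<alpha> (int b) k = int (fact K * ((b + \<sigma>) choose b))"
    using Wt_nat_b[OF p _ b, of k] a unfolding K_def \<sigma>_def q_def by simp
  have W2: "Wt p (\<alpha> - 1) (int b) k = int (fact (k div q') * ((b mod q' + \<sigma>') choose (b mod q')))"
  proof -
    have e: "\<alpha> - 1 - 1 = d" by (simp add: d_def)
    have "int (b mod q') = int b mod int q'" by (simp add: zmod_int)
    then have "nat (int b mod int (p ^ d)) = b mod q'" by (simp add: q'_def)
    then show ?thesis using Wt_pos[of "\<alpha> - 1" p "int b" k] a p2 unfolding \<sigma>'_def q'_def e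
      by simp
  qed
  have e1: "e \<le> multiplicity p (fact K :: nat) + multiplicity p ((b + \<sigma>) choose b)"
    using mult_W[OF p] dv W1 by simp
  have e2: "multiplicity p ((b + \<sigma>) choose b) \<le> multiplicity p ((b mod q' + \<sigma> mod q') choose (b mod q')) + 1"
    using binom_BL[OF p bq, of \<sigma>] \<sigma>q qq by (simp add: q'_def)
  have pK: "p * K \<le> k div q'"
  proof -
    have "K = (k div q') div p" unfolding K_def using qq by (simp add: div_mult2_eq)
    then show ?thesis by simp
  qed
  have e3: "K + multiplicity p (fact K :: nat) \<le> multiplicity p (fact (k div q') :: nat)"
    using fact_p_mult[OF p, of K] dvd_imp_multiplicity_le[OF fact_dvd[OF pK], of p] by simp
  have "e + i \<le> multiplicity p (fact (k div q') :: nat) + multiplicity p ((b mod q' + \<sigma>') choose (b mod q'))"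
    using e1 e2 e3 i unfolding K_def q_def \<sigma>' by linarith
  then show ?thesis unfolding W2 by (intro W_mult[OF p]) simp_all
qed



lemma cong_b_iff:
  assumes "b < q" "q > 0"
  shows "[int j = int b] (mod int q) \<longleftrightarrow> j mod q = b"
proof -
  have "[int j = int b] (mod int q) \<longleftrightarrow> [j = b] (mod q)" by (rule cong_int_iff)
  also have "\<dots> \<longleftrightarrow> j mod q = b" using assms by (simp add: cong_def)
  finally show ?thesis .
qed

lemma hF_val:
  assumes q: "q = p ^ (\<alpha> - 1)" "q > 0" and b: "b < q"
  shows "hF p \<alpha> b u j = (if j mod q = b then ff (int (j div q)) u else 0)"
proof -
  have iq: "int p ^ (\<alpha> - 1) = int q" using q by simp
  have "j mod q = b \<Longrightarrow> (int j - int b) div int q = int (j div q)"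
  proof -
    assume jm: "j mod q = b"
    have "j = q * (j div q) + b" using div_mult_mod_eq[of j q] jm by (simp add: mult.commute)
    then have "int j - int b = int q * int (j div q)" by (metis add_diff_cancel_right' of_nat_add of_nat_mult)
    then show ?thesis using q(2) by simp
  qed
  then show ?thesis unfolding hF_def iq using cong_b_iff[OF b q(2), of j] by auto
qed

lemma NN_single:
  assumes "\<And>j. j \<le> k \<Longrightarrow> j \<noteq> j0 \<Longrightarrow> g j = 0"
  shows "NN g k = (if j0 \<le> k then int (k choose j0) * (-1)^j0 * g j0 else 0)"
proof -
  have "NN g k = (\<Sum>j\<in>{0..k}. if j = j0 then int (k choose j) * (-1)^j * g j else 0)"
    unfolding NN_def using assms by (intro sum.cong) auto
  also have "\<dots> = (if j0 \<le> k then int (k choose j0) * (-1)^j0 * g j0 else 0)"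
    by (simp add: sum.delta')
  finally show ?thesis .
qed

lemma claim_big:
  assumes p: "prime p" and a: "\<alpha> \<ge> 1" and b: "b < p ^ (\<alpha> - 1)"
    and u: "k div p ^ (\<alpha> - 1) \<le> u"
    and dv: "int p ^ e dvd Wt p \<alpha> (int b) k"
  shows "int p ^ e dvd NN (hF p \<alpha> b u) k"
proof -
  define q where "q = p ^ (\<alpha> - 1)"
  define K where "K = k div q"
  define \<kappa> where "\<kappa> = k mod q"
  have p2: "p \<ge> 2" using prime_ge_2_nat[OF p] .
  have qpos: "q > 0" using p2 by (simp add: q_def)
  have bq: "b < q" using b q_def by simp
  have kK: "k = q * K + \<kappa>" unfolding K_def \<kappa>_def by simp
  have hv: "\<And>j. hF p \<alpha> b u j = (if j mod q = b then ff (int (j div q)) u else 0)"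
    by (rule hF_val[OF q_def qpos bq])
  have vanish: "hF p \<alpha> b u j = 0" if j: "j \<le> k" "j \<noteq> b + q * K" for j
  proof (cases "j mod q = b")
    case True
    have "j div q \<le> K" unfolding K_def using j(1) by (simp add: div_le_mono)
    moreover have "j div q \<noteq> K"
    proof
      assume "j div q = K"
      then have "j = b + q * K" using True by (metis div_mult_mod_eq add.commute mult.commute)
      then show False using j(2) by simp
    qed
    ultimately have "int (j div q) < int u" using u K_def q_def by simp
    then have "ff (int (j div q)) u = 0" by (intro ff_zero) simp_all
    then show ?thesis using hv True by simp
  next
    case False then show ?thesis using hv by simp
  qed
  have N: "NN (hF p \<alpha> b u) k = (if b + q * K \<le> k then int (k choose (b + q * K)) * (-1)^(b + q * K) * hF p \<alpha> b u (b + q * K) else 0)"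
    by (rule NN_single) (use vanish in auto)
  show ?thesis
  proof (cases "b + q * K \<le> k \<and> u = K")
    case False
    then have "NN (hF p \<alpha> b u) k = 0"
    proof (cases "b + q * K \<le> k")
      case True
      then have uK: "u \<noteq> K" using False by simp
      have "(b + q * K) mod q = b" "(b + q * K) div q = K" using bq qpos by simp_all
      then have "hF p \<alpha> b u (b + q * K) = ff (int K) u" using hv by simp
      also have "\<dots> = 0" using uK u K_def q_def by (intro ff_zero) simp_all
      finally show ?thesis using N by simp
    qed (use N in simp)
    then show ?thesis by simp
  next
    case True
    then have uK: "u = K" and le: "b + q * K \<le> k" by simp_all
    have bk: "b \<le> \<kappa>" using le kK by simp
    have kq: "\<kappa> < q" unfolding \<kappa>_def using qpos by simp
    have "(b + q * K) mod q = b" "(b + q * K) div q = K" using bq qpos by simp_all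
    then have "hF p \<alpha> b u (b + q * K) = int (fact K)" using hv uK ff_fact by simp
    then have N2: "NN (hF p \<alpha> b u) k = (-1)^(b + q * K) * int (fact K * (k choose (b + q * K)))"
      using N le by simp
    have \<sigma>: "nat ((int k - int b) mod int q) = \<kappa> - b"
    proof -
      have "int k - int b = int (\<kappa> - b) + int q * int K" using kK bk by simp
      then have "(int k - int b) mod int q = int (\<kappa> - b)" using kq by simp
      then show ?thesis by simp
    qed
    have W: "Wt p \<alpha> (int b) k = int (fact K * (\<kappa> choose b))"
      using Wt_nat_b[OF p a b, of k] \<sigma> bk unfolding K_def q_def by simp
    have e1: "e \<le> multiplicity p (fact K :: nat) + multiplicity p (\<kappa> choose b)"
      using mult_W[OF p] dv W bk by simp
    have e2: "multiplicity p (\<kappa> choose b) \<le> multiplicity p ((q * K + \<kappa>) choose (q * K + b))"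
      using binom_LT[OF p bk, of "\<alpha> - 1" K] kq by (simp add: q_def)
    have e': "e \<le> multiplicity p (fact K :: nat) + multiplicity p ((q * K + \<kappa>) choose (q * K + b))"
      using e1 e2 by linarith
    have ce: "(q * K + \<kappa>) choose (q * K + b) = k choose (b + q * K)" using kK by (simp add: add.commute)
    have nz: "k choose (b + q * K) \<noteq> 0" using le by simp
    have "int p ^ e dvd int (fact K * (k choose (b + q * K)))"
      by (rule W_mult[OF p nz]) (use e' ce in simp)
    then show ?thesis using N2 by simp
  qed
qed



lemma claim_small:
  assumes p: "prime p" and a: "\<alpha> \<ge> 2" and b: "b < p ^ (\<alpha> - 1)"
    and u: "u < k div p ^ (\<alpha> - 1)"
    and IH: "\<And>r i. good p (\<alpha> - 1) r (gT p (\<alpha> - 1) r i)"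
    and dv: "int p ^ e dvd Wt p \<alpha> (int b) k"
  shows "int p ^ e dvd NN (hF p \<alpha> b u) k"
proof -
  obtain s where s: "\<And>x. ff x u = (\<Sum>i\<le>u. s i * x^i)" using ff_mono by blast
  define hM where "hM i n = (if [int n = int b] (mod int p ^ (\<alpha> - 1)) then ((int n - int b) div int p ^ (\<alpha> - 1))^i else 0)" for i n
  have hFe: "hF p \<alpha> b u = (\<lambda>n. \<Sum>i\<le>u. s i * hM i n)"
    by (rule ext) (simp add: hF_def hM_def s)
  have gTe: "gT p (\<alpha> - 1) (int b) i = (\<lambda>n. int p ^ i * hM i n)" for i
    by (rule ext) (simp add: gT_def hM_def)
  have "int p ^ e dvd NN (hM i) k" if i: "i \<le> u" for i
  proof -
    have "int p ^ (e + i) dvd Wt p (\<alpha> - 1) (int b) k"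
      by (rule VI[OF p a b _ dv]) (use i u in linarith)
    then have "int p ^ (e + i) dvd NN (gT p (\<alpha> - 1) (int b) i) k"
      using IH[of "int b" i] unfolding good_def by blast
    then have "int p ^ i * int p ^ e dvd int p ^ i * NN (hM i) k"
      unfolding gTe NN_mult by (simp add: power_add mult.commute)
    then show ?thesis using p prime_gt_0_nat[OF p] by simp
  qed
  then show ?thesis unfolding hFe NN_sum NN_mult by (intro dvd_sum dvd_mult) auto
qed

lemma claimA:
  assumes p: "prime p" and a: "\<alpha> \<ge> 2" and b: "b < p ^ (\<alpha> - 1)"
    and IH: "\<And>r i. good p (\<alpha> - 1) r (gT p (\<alpha> - 1) r i)"
  shows "good p \<alpha> (int b) (hF p \<alpha> b u)"
  unfolding good_def
proof (intro allI impI)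
  fix k e assume dv: "int p ^ e dvd Wt p \<alpha> (int b) k"
  show "int p ^ e dvd NN (hF p \<alpha> b u) k"
  proof (cases "u < k div p ^ (\<alpha> - 1)")
    case True then show ?thesis using claim_small[OF p a b True IH dv] by simp
  next
    case False then show ?thesis using claim_big[OF p _ b _ dv] a by simp
  qed
qed

lemma euler_int:
  assumes p: "prime p" and y: "\<not> int p dvd y"
  shows "[y ^ ((p - 1) * p ^ e) = 1] (mod int p ^ e)"
proof -
  define m where "m = p ^ Suc e"
  have mpos: "m > 0" using prime_gt_0_nat[OF p] by (simp add: m_def)
  define z where "z = nat (y mod int m)"
  have zy: "int z = y mod int m" unfolding z_def using mpos by simp
  have yz: "[y = int z] (mod int m)" using zy by (simp add: cong_def)
  have "\<not> p dvd z"
  proof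
    assume "p dvd z"
    then have "int p dvd y mod int m" using zy by (metis of_nat_dvd_iff)
    moreover have "int p dvd int m" by (simp add: m_def)
    ultimately have "int p dvd y" by (metis dvd_mod_iff)
    then show False using y by simp
  qed
  then have "coprime z p" using p by (simp add: prime_imp_coprime coprime_commute)
  then have "coprime z m" by (simp add: m_def)
  then have "[z ^ totient m = 1] (mod m)" by (rule euler_theorem)
  then have "[z ^ ((p - 1) * p ^ e) = 1] (mod m)"
    using totient_prime_power_Suc[OF p, of e] by (simp add: m_def mult.commute)
  then have "[int z ^ ((p - 1) * p ^ e) = 1] (mod int m)"
    using cong_int_iff[of "z ^ ((p - 1) * p ^ e)" 1 m] by simp
  moreover have "[y ^ ((p - 1) * p ^ e) = int z ^ ((p - 1) * p ^ e)] (mod int m)"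
    by (rule cong_pow[OF yz])
  ultimately have "[y ^ ((p - 1) * p ^ e) = 1] (mod int m)" by (rule cong_trans[rotated])
  then show ?thesis by (rule cong_dvd_modulus) (simp add: m_def)
qed



lemma e_le_M: "prime p \<Longrightarrow> e \<le> (p - 1) * p ^ e"
proof -
  assume p: "prime p"
  have p2: "p \<ge> 2" using prime_ge_2_nat[OF p] .
  have "e < 2 ^ e" by (rule less_exp)
  also have "(2::nat) ^ e \<le> p ^ e" using p2 by (simp add: power_mono)
  also have "p ^ e \<le> (p - 1) * p ^ e" using p2 by simp
  finally show ?thesis by simp
qed

lemma LIM:
  assumes p: "prime p" and a: "\<alpha> \<ge> 1"
    and H: "\<And>b u. b < p ^ (\<alpha> - 1) \<Longrightarrow> good p \<alpha> (int b) (hF p \<alpha> b u)"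
  shows "good p \<alpha> r (gT p \<alpha> r i)"
proof -
  define q where "q = p ^ (\<alpha> - 1)"
  have p2: "p \<ge> 2" using prime_ge_2_nat[OF p] .
  have qpos: "q > 0" using p2 by (simp add: q_def)
  define b where "b = nat (r mod int q)"
  define r1 where "r1 = r div int q"
  have ib: "int b = r mod int q" unfolding b_def using qpos by simp
  have "r mod int q < int q" using qpos by simp
  then have bq: "b < p ^ (\<alpha> - 1)" using ib unfolding q_def by linarith
  have rb: "r = int q * r1 + int b" unfolding ib r1_def by simp
  have iq: "int p ^ (\<alpha> - 1) = int q" by (simp add: q_def)
  have aa: "\<alpha> = Suc (\<alpha> - 1)" using a by simp
  have iQ: "int p ^ \<alpha> = int q * int p" unfolding q_def by (subst aa) (simp add: power_Suc2)
  have rbc: "[r = int b] (mod int q)" by (simp add: cong_def ib)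
  have "good p \<alpha> (int b) (gT p \<alpha> r i)"
    unfolding good_def
  proof (intro allI impI)
    fix k e assume dv: "int p ^ e dvd Wt p \<alpha> (int b) k"
    define M where "M = (p - 1) * p ^ e"
    have eM: "e \<le> M" unfolding M_def by (rule e_le_M[OF p])
    obtain d1 where d1: "\<And>x. (x - r1)^i = (\<Sum>u\<le>i. d1 u * ff x u)" using pow_ff by blast
    obtain d2 where d2: "\<And>x. (x - r1)^(i+M) = (\<Sum>u\<le>i+M. d2 u * ff x u)" using pow_ff by blast
    define G where "G n = (\<Sum>u\<le>i. d1 u * hF p \<alpha> b u n) - (\<Sum>u\<le>i+M. d2 u * hF p \<alpha> b u n)" for n
    have g1: "good p \<alpha> (int b) (\<lambda>n. \<Sum>u\<le>i. d1 u * hF p \<alpha> b u n)"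
      by (intro good_sum good_mult H bq)
    have g2: "good p \<alpha> (int b) (\<lambda>n. \<Sum>u\<le>i+M. d2 u * hF p \<alpha> b u n)"
      by (intro good_sum good_mult H bq)
    have gG: "good p \<alpha> (int b) G" unfolding G_def by (rule good_diff[OF g1 g2])
    have NG: "int p ^ e dvd NN G k" using gG dv unfolding good_def by blast
    have hFv: "hF p \<alpha> b u n = (if [int n = int b] (mod int q) then ff ((int n - int b) div int q) u else 0)" for u n
      unfolding hF_def iq by (rule refl)
    have Gv: "G n = (if [int n = int b] (mod int q) then
        (((int n - int b) div int q) - r1)^i - (((int n - int b) div int q) - r1)^(i+M) else 0)" for n
      by (cases "[int n = int b] (mod int q)") (simp_all add: G_def hFv d1 d2)
    have pw: "[gT p \<alpha> r i n = G n] (mod int p ^ e)" for n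
    proof (cases "[int n = int b] (mod int q)")
      case False
      have "\<not> [int n = r] (mod int p ^ \<alpha>)"
      proof
        assume "[int n = r] (mod int p ^ \<alpha>)"
        then have "[int n = r] (mod int q)" by (rule cong_dvd_modulus) (simp add: iQ)
        then have "[int n = int b] (mod int q)" using rbc by (rule cong_trans)
        then show False using False by simp
      qed
      then show ?thesis using False by (simp add: gT_def Gv)
    next
      case True
      define x where "x = (int n - int b) div int q"
      have "int q dvd int n - int b" using True by (simp add: cong_iff_dvd_diff)
      then have nx: "int n - int b = int q * x" unfolding x_def by simp
      define y where "y = x - r1"
      have ny: "int n - r = int q * y" using nx rb by (simp add: y_def algebra_simps)
      have Gn: "G n = y^i - y^(i+M)" using Gv True by (simp add: x_def y_def)
      show ?thesis
      proof (cases "int p dvd y")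
        case True
        then obtain z where z: "y = int p * z" by blast
        have nz: "int n - r = int p ^ \<alpha> * z" using ny z iQ by simp
        have c: "[int n = r] (mod int p ^ \<alpha>)" using nz by (simp add: cong_iff_dvd_diff)
        have "(int n - r) div int p ^ \<alpha> = z" using nz p2 by simp
        then have gv: "gT p \<alpha> r i n = y ^ i" using c z by (simp add: gT_def power_mult_distrib)
        have "int p ^ e dvd int p ^ (i + M)" using eM by (simp add: le_imp_power_dvd)
        also have "int p ^ (i + M) dvd y ^ (i + M)" using z by (simp add: power_mult_distrib)
        finally have "int p ^ e dvd y ^ i - (y ^ i - y ^ (i + M))" by simp
        then show ?thesis using gv Gn by (simp add: cong_iff_dvd_diff)
      next
        case False
        have nc: "\<not> [int n = r] (mod int p ^ \<alpha>)"
        proof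
          assume "[int n = r] (mod int p ^ \<alpha>)"
          then have "int q * int p dvd int q * y" using ny iQ by (simp add: cong_iff_dvd_diff)
          then have "int p dvd y" using qpos by simp
          then show False using False by simp
        qed
        have eu: "[y ^ M = 1] (mod int p ^ e)" unfolding M_def by (rule euler_int[OF p False])
        have "[y ^ i * y ^ M = y ^ i * 1] (mod int p ^ e)" by (intro cong_mult cong_refl eu)
        then have "[y ^ (i + M) = y ^ i] (mod int p ^ e)" by (simp add: power_add)
        then have "[0 = y ^ i - y ^ (i + M)] (mod int p ^ e)"
          by (simp add: cong_iff_dvd_diff)
        then show ?thesis using nc Gn by (simp add: gT_def)
      qed
    qed
    have "[NN (gT p \<alpha> r i) k = NN G k] (mod int p ^ e)" by (intro NN_cong pw)
    then show "int p ^ e dvd NN (gT p \<alpha> r i) k" using NG cong_dvd_iff by blast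
  qed
  then show ?thesis using good_mod[OF a, of p r] ib prime_gt_0_nat[OF p] unfolding q_def by simp
qed

lemma main_good:
  assumes p: "prime p" and a: "\<alpha> \<ge> 1"
  shows "good p \<alpha> r (gT p \<alpha> r i)"
proof -
  have "\<forall>r i. good p \<alpha> r (gT p \<alpha> r i)" using a
  proof (induction \<alpha> rule: nat_induct_at_least)
    case base
    show ?case
    proof (intro allI)
      fix r i
      show "good p 1 r (gT p 1 r i)"
      proof (rule LIM[OF p])
        fix b u assume "b < p ^ (1 - 1)"
        then have "b = 0" by simp
        then show "good p 1 (int b) (hF p 1 b u)" using claim1[OF p] by simp
      qed simp
    qed
  next
    case (Suc n)
    show ?case
    proof (intro allI)
      fix r i
      show "good p (Suc n) r (gT p (Suc n) r i)"
      proof (rule LIM[OF p])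
        fix b u assume b: "b < p ^ (Suc n - 1)"
        show "good p (Suc n) (int b) (hF p (Suc n) b u)"
          by (rule claimA[OF p _ b]) (use Suc in auto)
      qed simp
    qed
  qed
  then show ?thesis by blast
qed



theorem theorem1p4:
  fixes p \<alpha> l :: nat and r :: int and c :: "nat \<Rightarrow> nat \<Rightarrow> int"
  assumes "prime p"
    and "\<And>i. i \<le> l \<Longrightarrow> padic_int p (c i)"
    and "\<not> padic_eq p (c l) (\<lambda>_. 0)"
  shows "\<exists>a :: nat \<Rightarrow> nat \<Rightarrow> int. (\<forall>k. padic_int p (a k)) \<and>
           (\<forall>n. padic_eq p (lhs_comp p \<alpha> r a n) (rhs_comp p \<alpha> r l c n))"
proof -
  have p: "prime p" by fact
  have p0: "p > 0" using prime_gt_0_nat[OF p] .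
  have gd: "good p \<alpha> r (gT p \<alpha> r i)" for i
  proof (cases "\<alpha> = 0")
    case True then show ?thesis using thm_alpha0[OF p] by simp
  next
    case False then show ?thesis using main_good[OF p] by simp
  qed
  define wn where "wn k = fact (flr p \<alpha> k) * (nat (frc p \<alpha> r + frc p \<alpha> (int k - r)) choose nat (frc p \<alpha> r))" for k
  have Wn: "Wt p \<alpha> r k = int (wn k)" for k by (simp add: Wt_def wn_def)
  have frc0: "frc p \<alpha> x \<ge> 0" for x using p0 by (simp add: frc_def)
  have wn0: "wn k \<noteq> 0" for k
  proof -
    have "nat (frc p \<alpha> r) \<le> nat (frc p \<alpha> r + frc p \<alpha> (int k - r))"
      using frc0[of r] frc0[of "int k - r"] by linarith
    then show ?thesis using frc0[of "int k - r"] by (simp add: wn_def)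
  qed
  define E where "E k = multiplicity p (wn k)" for k
  define u where "u k = wn k div p ^ E k" for k
  have wE: "wn k = p ^ E k * u k" for k
    unfolding u_def E_def by (simp add: multiplicity_dvd)
  have up: "\<not> p dvd u k" for k
  proof
    assume "p dvd u k"
    then have "p ^ Suc (E k) dvd wn k" using wE[of k] by simp
    then have "Suc (E k) \<le> E k" unfolding E_def using pow_dvd_iff_mult[OF p wn0] by blast
    then show False by simp
  qed
  have upi: "\<not> int p dvd int (u k)" for k using up by simp
  have cop: "coprime (int (u k)) (int p ^ m)" for k m
  proof -
    have "coprime (int (u k)) (int p)" using upi p
      by (simp add: prime_imp_coprime coprime_commute)
    then show ?thesis by simp
  qed
  define NNi where "NNi i k = NN (gT p \<alpha> r i) k" for i k
  have Ndv: "int p ^ E k dvd NNi i k" for i k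
  proof -
    have "int p ^ E k dvd Wt p \<alpha> r k" unfolding Wn wE by simp
    then show ?thesis using gd[of i] unfolding good_def NNi_def by blast
  qed
  define iv where "iv k m = int (u k) ^ ((p - 1) * p ^ m - 1)" for k m
  have Mpos: "(p - 1) * p ^ m \<ge> 1" for m using prime_ge_2_nat[OF p] by simp
  have uinv: "[int (u k) * iv k m = 1] (mod int p ^ m)" for k m
  proof -
    define M where "M = (p - 1) * p ^ m"
    have "M \<ge> 1" using Mpos[of m] unfolding M_def .
    then have M1: "Suc (M - 1) = M" by simp
    have "int (u k) * iv k m = int (u k) ^ Suc (M - 1)" unfolding iv_def M_def[symmetric] by simp
    also have "\<dots> = int (u k) ^ M" by (simp only: M1)
    finally show ?thesis using euler_int[OF p upi[of k], of m] unfolding M_def by simp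
  qed
  define X where "X k m = (\<Sum>i\<le>l. c i m * int p ^ (l - i) * (NNi i k div int p ^ E k))" for k m
  define a where "a k m = X k m * iv k m" for k m
  have pX: "int p ^ E k * X k m = (\<Sum>i\<le>l. c i m * int p ^ (l - i) * NNi i k)" for k m
    unfolding X_def sum_distrib_left
    by (intro sum.cong refl) (use Ndv in \<open>simp add: algebra_simps\<close>)
  have pint: "padic_int p (a k)" for k
    unfolding padic_int_def
  proof
    fix m
    have c1: "[X k (Suc m) = X k m] (mod int p ^ m)"
      unfolding X_def
    proof (intro cong_sum cong_mult cong_refl)
      fix i assume "i \<in> {..l}"
      then show "[c i (Suc m) = c i m] (mod int p ^ m)"
        using assms(2)[of i] unfolding padic_int_def by simp
    qed
    have "[int (u k) * iv k (Suc m) = 1] (mod int p ^ m)"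
      using uinv[of k "Suc m"] by (rule cong_dvd_modulus) simp
    moreover have "[1 = int (u k) * iv k m] (mod int p ^ m)" using uinv[of k m] by (rule cong_sym)
    ultimately have "[int (u k) * iv k (Suc m) = int (u k) * iv k m] (mod int p ^ m)" by (rule cong_trans)
    then have c2: "[iv k (Suc m) = iv k m] (mod int p ^ m)" using cong_mult_lcancel[OF cop] by blast
    show "[a k (Suc m) = a k m] (mod int p ^ m)" unfolding a_def by (rule cong_mult[OF c1 c2])
  qed
  have peq: "padic_eq p (lhs_comp p \<alpha> r a n) (rhs_comp p \<alpha> r l c n)" for n
    unfolding padic_eq_def
  proof
    fix m
    have trm: "int (n choose k) * (-1) ^ k * int (fact (flr p \<alpha> k))
        * int (nat (frc p \<alpha> r + frc p \<alpha> (int k - r)) choose nat (frc p \<alpha> r)) * a k m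
        = int (n choose k) * (-1) ^ k * (int p ^ E k * X k m) * (int (u k) * iv k m)" for k
    proof -
      have "int (fact (flr p \<alpha> k)) * int (nat (frc p \<alpha> r + frc p \<alpha> (int k - r)) choose nat (frc p \<alpha> r))
            = int p ^ E k * int (u k)"
      proof -
        have "int (wn k) = int (p ^ E k * u k)" using wE[of k] by simp
        then show ?thesis unfolding wn_def of_nat_mult by simp
      qed
      then show ?thesis unfolding a_def by (simp only: ac_simps)
    qed
    have "[lhs_comp p \<alpha> r a n m = (\<Sum>k=0..n. int (n choose k) * (-1) ^ k * (int p ^ E k * X k m) * 1)] (mod int p ^ m)"
      unfolding lhs_comp_def trm by (intro cong_sum cong_mult cong_refl uinv)
    also have "(\<Sum>k=0..n. int (n choose k) * (-1) ^ k * (int p ^ E k * X k m) * 1)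
        = (\<Sum>k=0..n. int (n choose k) * (-1) ^ k * (\<Sum>i\<le>l. c i m * int p ^ (l - i) * NNi i k))"
      by (simp add: pX)
    also have "\<dots> = (\<Sum>k=0..n. \<Sum>i\<le>l. c i m * int p ^ (l - i) * (int (n choose k) * (-1) ^ k * NNi i k))"
      unfolding sum_distrib_left by (intro sum.cong refl) (simp only: ac_simps)
    also have "\<dots> = (\<Sum>i\<le>l. \<Sum>k=0..n. c i m * int p ^ (l - i) * (int (n choose k) * (-1) ^ k * NNi i k))"
      by (rule sum.swap)
    also have "\<dots> = (\<Sum>i\<le>l. c i m * int p ^ (l - i) * (\<Sum>k=0..n. int (n choose k) * (-1) ^ k * NNi i k))"
      unfolding sum_distrib_left ..
    also have "\<dots> = (\<Sum>i\<le>l. c i m * int p ^ (l - i) * gT p \<alpha> r i n)"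
      unfolding NNi_def NN_inversion ..
    also have "\<dots> = rhs_comp p \<alpha> r l c n m"
    proof (cases "[int n = r] (mod int p ^ \<alpha>)")
      case True
      have "(\<Sum>i\<le>l. c i m * int p ^ (l - i) * gT p \<alpha> r i n)
          = (\<Sum>i\<le>l. int p ^ l * (c i m * ((int n - r) div int p ^ \<alpha>) ^ i))"
      proof (intro sum.cong refl)
        fix i assume "i \<in> {..l}"
        then have "int p ^ (l - i) * int p ^ i = int p ^ l" by (simp add: power_add[symmetric])
        then show "c i m * int p ^ (l - i) * gT p \<alpha> r i n = int p ^ l * (c i m * ((int n - r) div int p ^ \<alpha>) ^ i)"
          using True by (simp add: gT_def algebra_simps)
      qed
      then show ?thesis using True by (simp add: rhs_comp_def sum_distrib_left)
    next
      case False
      then show ?thesis by (simp add: rhs_comp_def gT_def)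
    qed
    finally show "[lhs_comp p \<alpha> r a n m = rhs_comp p \<alpha> r l c n m] (mod int p ^ m)" .
  qed
  show ?thesis using pint peq by blast
qed

end
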